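(* Let $U_1,U_2,V_1,V_2$ be four real random variables defined on a common probability space such that (1) $U_1$ and $U_2$ have the same distribution, and (2) for all $i,j\in\{1,2\}$, $U_i$ and $V_j$ are independent. If $U_1+V_1=U_2+V_2$ almost surely, then $U_1=U_2$ almost surely. *)

theory Defs
  imports "HOL-Probability.Probability"
begin

end

theory Submission
  imports Defs
begin

lemma arctan_meas[measurable]: "arctan \<in> borel_measurable borel"
  by (intro borel_measurable_continuous_onI continuous_on_arctan continuous_on_id)

theorem mainTheorem2:
  fixes M :: "'a measure" and U1 U2 V1 V2 :: "'a \<Rightarrow> real"
  assumes "prob_space M"
    and "U1 \<in> borel_measurable M" and "U2 \<in> borel_measurable M"
    and "V1 \<in> borel_measurable M" and "V2 \<in> borel_measurable M"
    and "distr M borel U1 = distr M borel U2"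
    and "prob_space.indep_var M borel U1 borel V1"
    and "prob_space.indep_var M borel U1 borel V2"
    and "prob_space.indep_var M borel U2 borel V1"
    and "prob_space.indep_var M borel U2 borel V2"
    and "AE x in M. U1 x + V1 x = U2 x + V2 x"
  shows "AE x in M. U1 x = U2 x"
proof -
  interpret prob_space M by fact
  note [measurable] = assms(2-5)
  define f where "f = arctan"
  have fm[measurable]: "f \<in> borel_measurable borel" unfolding f_def by measurable
  have ab: "\<bar>arctan y\<bar> * 2 \<le> pi" for y
    using arctan_bounded[of y] by (simp add: abs_if)
  have intg: "integrable M (\<lambda>x. f (X x))" if [measurable]: "X \<in> borel_measurable M" for X
    by (rule integrable_const_bound[where B="pi/2"])
       (auto simp: f_def ab)
  have ind: "integral\<^sup>L M (\<lambda>x. f (X x) * f (Y x)) = integral\<^sup>L M (\<lambda>x. f (X x)) * integral\<^sup>L M (\<lambda>x. f (Y x))"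
    "integrable M (\<lambda>x. f (X x) * f (Y x))"
    if [measurable]: "X \<in> borel_measurable M" "Y \<in> borel_measurable M"
      and i: "indep_var borel X borel Y" for X Y
  proof -
    have "indep_var borel (f \<circ> X) borel (f \<circ> Y)"
      by (rule indep_var_compose[OF i fm fm])
    hence i2: "indep_var borel (\<lambda>x. f (X x)) borel (\<lambda>x. f (Y x))" by (simp add: comp_def)
    show "integral\<^sup>L M (\<lambda>x. f (X x) * f (Y x)) = integral\<^sup>L M (\<lambda>x. f (X x)) * integral\<^sup>L M (\<lambda>x. f (Y x))"
      by (rule indep_var_lebesgue_integral[OF i2 intg intg]) measurable
    show "integrable M (\<lambda>x. f (X x) * f (Y x))"
      by (rule indep_var_integrable[OF i2 intg intg]) measurable
  qed
  have eqU: "integral\<^sup>L M (\<lambda>x. f (U1 x)) = integral\<^sup>L M (\<lambda>x. f (U2 x))"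
  proof -
    have "integral\<^sup>L M (\<lambda>x. f (U1 x)) = integral\<^sup>L (distr M borel U1) f"
      by (rule integral_distr[symmetric]) measurable
    also have "\<dots> = integral\<^sup>L (distr M borel U2) f" using assms(6) by simp
    also have "\<dots> = integral\<^sup>L M (\<lambda>x. f (U2 x))"
      by (rule integral_distr) measurable
    finally show ?thesis .
  qed
  define P where "P x = (f (U1 x) - f (U2 x)) * (f (V2 x) - f (V1 x))" for x
  have Pexp: "P x = f (U1 x) * f (V2 x) - f (U1 x) * f (V1 x) - f (U2 x) * f (V2 x) + f (U2 x) * f (V1 x)" for x
    unfolding P_def by (simp add: algebra_simps)
  have Pint: "integrable M P"
    unfolding Pexp[abs_def]
    using ind(2)[OF _ _ assms(7)] ind(2)[OF _ _ assms(8)] ind(2)[OF _ _ assms(9)] ind(2)[OF _ _ assms(10)]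
    by auto
  have "integral\<^sup>L M P = 0"
    unfolding Pexp[abs_def]
    using ind[OF _ _ assms(7)] ind[OF _ _ assms(8)] ind[OF _ _ assms(9)] ind[OF _ _ assms(10)] eqU
    by (simp add: Bochner_Integration.integral_diff Bochner_Integration.integral_add)
  moreover have "AE x in M. 0 \<le> P x"
    using assms(11)
  proof eventually_elim
    case (elim x)
    show ?case
    proof (cases "U1 x \<le> U2 x")
      case True
      hence "V2 x \<le> V1 x" using elim by linarith
      then show ?thesis using True unfolding P_def f_def
        by (intro mult_nonpos_nonpos) (auto simp: arctan_le_iff)
    next
      case False
      hence "V1 x \<le> V2 x" using elim by linarith
      then show ?thesis using False unfolding P_def f_def
        by (intro mult_nonneg_nonneg) (auto simp: arctan_le_iff)
    qed
  qed
  ultimately have "AE x in M. P x = 0"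
    using integral_nonneg_eq_0_iff_AE[OF Pint] by simp
  with assms(11) show ?thesis
  proof eventually_elim
    case (elim x)
    then show ?case unfolding P_def f_def
      by (auto simp: arctan_eq_iff)
  qed
qed

end
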